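(* Let $G$ be a graph with no induced $P_7$, $C_4$, $C_6$ or $C_7$, let $H=(B_1,\dots,B_5)$ be a nice blowup of $C_5$ in $G$, and let $i\in\{1,\dots,5\}$. If $a-b-c$ is an induced path on three vertices with $a,b,c\in A_3(i)$, then $N_H(a)\subseteq N_H(b)$ and $N_H(c)\subseteq N_H(b)$.
   Context: Indices modulo $5$. A nice blowup of $C_5$ is a tuple $(B_1,\dots,B_5)$ of pairwise disjoint cliques such that every vertex of $B_j$ has a neighbor in $B_{j-1}$ and in $B_{j+1}$, $B_j$ is anticomplete to $B_{j+2}$, and there are no $a\in B_j$, distinct $b,c\in B_{j+1}$, $d\in B_{j+2}$ with $G[\{a,b,c,d\}]\cong P_4$; $V(H)=\bigcup B_j$. For $v\notin V(H)$, $\operatorname{supp}(v)$ is the set of $j$ such that $v$ has a neighbor in $B_j$; $A_3(i)=\{v\notin V(H):\operatorname{supp}(v)=\{i-1,i,i+1\}\}$; $N_H(v)$ is the set of neighbors of $v$ in $V(H)$. *)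

theory Defs
  imports Main
begin

definition simple_graph :: "'a set \<Rightarrow> ('a \<Rightarrow> 'a \<Rightarrow> bool) \<Rightarrow> bool" where
  "simple_graph V E \<longleftrightarrow> finite V \<and> (\<forall>x y. E x y \<longrightarrow> x \<in> V \<and> y \<in> V)
     \<and> (\<forall>x y. E x y \<longrightarrow> E y x) \<and> (\<forall>x. \<not> E x x)"

definition induced_path :: "'a set \<Rightarrow> ('a \<Rightarrow> 'a \<Rightarrow> bool) \<Rightarrow> 'a list \<Rightarrow> bool" where
  "induced_path V E xs \<longleftrightarrow> distinct xs \<and> set xs \<subseteq> V \<and>
     (\<forall>i<length xs. \<forall>j<length xs. E (xs!i) (xs!j) \<longleftrightarrow> (i = j + 1 \<or> j = i + 1))"

definition induced_cycle :: "'a set \<Rightarrow> ('a \<Rightarrow> 'a \<Rightarrow> bool) \<Rightarrow> 'a list \<Rightarrow> bool" where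
  "induced_cycle V E xs \<longleftrightarrow> distinct xs \<and> set xs \<subseteq> V \<and>
     (\<forall>i<length xs. \<forall>j<length xs. E (xs!i) (xs!j) \<longleftrightarrow>
        (i = (j + 1) mod length xs \<or> j = (i + 1) mod length xs))"

definition has_induced_P :: "nat \<Rightarrow> 'a set \<Rightarrow> ('a \<Rightarrow> 'a \<Rightarrow> bool) \<Rightarrow> bool" where
  "has_induced_P k V E \<longleftrightarrow> (\<exists>xs. length xs = k \<and> induced_path V E xs)"

definition has_induced_C :: "nat \<Rightarrow> 'a set \<Rightarrow> ('a \<Rightarrow> 'a \<Rightarrow> bool) \<Rightarrow> bool" where
  "has_induced_C k V E \<longleftrightarrow> (\<exists>xs. length xs = k \<and> induced_cycle V E xs)"

text \<open>Blowups of C5 are indexed by 0..4 (paper: 1..5), indices taken mod 5.\<close>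
definition clique :: "'a set \<Rightarrow> ('a \<Rightarrow> 'a \<Rightarrow> bool) \<Rightarrow> 'a set \<Rightarrow> bool" where
  "clique V E X \<longleftrightarrow> X \<subseteq> V \<and> (\<forall>x\<in>X. \<forall>y\<in>X. x \<noteq> y \<longrightarrow> E x y)"

definition anticomplete :: "('a \<Rightarrow> 'a \<Rightarrow> bool) \<Rightarrow> 'a set \<Rightarrow> 'a set \<Rightarrow> bool" where
  "anticomplete E X Y \<longleftrightarrow> (\<forall>x\<in>X. \<forall>y\<in>Y. \<not> E x y)"

definition nice_blowup_C5 :: "'a set \<Rightarrow> ('a \<Rightarrow> 'a \<Rightarrow> bool) \<Rightarrow> (nat \<Rightarrow> 'a set) \<Rightarrow> bool" where
  "nice_blowup_C5 V E B \<longleftrightarrow>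
     (\<forall>j<5. clique V E (B j)) \<and>
     (\<forall>j<5. \<forall>k<5. j \<noteq> k \<longrightarrow> B j \<inter> B k = {}) \<and>
     (\<forall>j<5. \<forall>v\<in>B j. (\<exists>u\<in>B ((j + 4) mod 5). E v u) \<and> (\<exists>u\<in>B ((j + 1) mod 5). E v u)) \<and>
     (\<forall>j<5. anticomplete E (B j) (B ((j + 2) mod 5))) \<and>
     (\<forall>j<5. \<not> (\<exists>a b c d. a \<in> B j \<and> b \<in> B ((j + 1) mod 5) \<and> c \<in> B ((j + 1) mod 5) \<and> b \<noteq> c
            \<and> d \<in> B ((j + 2) mod 5) \<and>
            (\<exists>xs. length xs = 4 \<and> set xs = {a, b, c, d} \<and> induced_path V E xs)))"

definition VH :: "(nat \<Rightarrow> 'a set) \<Rightarrow> 'a set" where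
  "VH B = (\<Union>j<5. B j)"

definition supp :: "('a \<Rightarrow> 'a \<Rightarrow> bool) \<Rightarrow> (nat \<Rightarrow> 'a set) \<Rightarrow> 'a \<Rightarrow> nat set" where
  "supp E B v = {j. j < 5 \<and> (\<exists>u\<in>B j. E v u)}"

definition A3 :: "'a set \<Rightarrow> ('a \<Rightarrow> 'a \<Rightarrow> bool) \<Rightarrow> (nat \<Rightarrow> 'a set) \<Rightarrow> nat \<Rightarrow> 'a set" where
  "A3 V E B i = {v \<in> V - VH B. supp E B v = {(i + 4) mod 5, i, (i + 1) mod 5}}"

definition NH :: "('a \<Rightarrow> 'a \<Rightarrow> bool) \<Rightarrow> (nat \<Rightarrow> 'a set) \<Rightarrow> 'a \<Rightarrow> 'a set" where
  "NH E B v = {u \<in> VH B. E v u}"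

end

theory Submission
  imports Defs
begin

lemma sg_facts:
  assumes "simple_graph V E"
  shows "\<And>x y. E x y = E y x" "\<And>x. \<not> E x x" "\<And>x y. E x y \<Longrightarrow> x \<in> V" "\<And>x y. E x y \<Longrightarrow> y \<in> V"
  using assms unfolding simple_graph_def by blast+

lemma C4I:
  assumes sg: "simple_graph V E"
  and "E a b" "E b c" "E c d" "E d a" "\<not>E a c" "\<not>E b d" "a \<noteq> c" "b \<noteq> d"
  shows "has_induced_C 4 V E"
proof -
  note f = sg_facts[OF sg]
  let ?xs = "[a,b,c,d]"
  have "induced_cycle V E ?xs"
    unfolding induced_cycle_def
  proof (intro conjI)
    show "distinct ?xs" using assms(2-) f(1,2) by auto
    show "set ?xs \<subseteq> V" using assms(2-) f(3,4) by auto
    show "\<forall>i<length ?xs. \<forall>j<length ?xs. E (?xs!i) (?xs!j) \<longleftrightarrow> (i = (j + 1) mod length ?xs \<or> j = (i + 1) mod length ?xs)"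
      using assms(2-) f(1,2) by (simp add: All_less_Suc2)
  qed
  then show ?thesis unfolding has_induced_C_def by (intro exI[of _ ?xs]) simp
qed

lemma C6I:
  assumes sg: "simple_graph V E"
  and "E a b" "E b c" "E c d" "E d e" "E e f" "E f a"
  "\<not>E a c" "\<not>E a d" "\<not>E a e" "\<not>E b d" "\<not>E b e" "\<not>E b f" "\<not>E c e" "\<not>E c f" "\<not>E d f"
  shows "has_induced_C 6 V E"
proof -
  note f = sg_facts[OF sg]
  let ?xs = "[a,b,c,d,e,f]"
  have "induced_cycle V E ?xs"
    unfolding induced_cycle_def
  proof (intro conjI)
    show "distinct ?xs" using assms(2-) f(1,2) by auto
    show "set ?xs \<subseteq> V" using assms(2-) f(3,4) by auto
    show "\<forall>i<length ?xs. \<forall>j<length ?xs. E (?xs!i) (?xs!j) \<longleftrightarrow> (i = (j + 1) mod length ?xs \<or> j = (i + 1) mod length ?xs)"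
      using assms(2-) f(1,2) by (simp add: All_less_Suc2)
  qed
  then show ?thesis unfolding has_induced_C_def by (intro exI[of _ ?xs]) simp
qed

lemma C7I:
  assumes sg: "simple_graph V E"
  and "E a b" "E b c" "E c d" "E d e" "E e f" "E f g" "E g a"
  "\<not>E a c" "\<not>E a d" "\<not>E a e" "\<not>E a f" "\<not>E b d" "\<not>E b e" "\<not>E b f" "\<not>E b g"
  "\<not>E c e" "\<not>E c f" "\<not>E c g" "\<not>E d f" "\<not>E d g" "\<not>E e g"
  shows "has_induced_C 7 V E"
proof -
  note f = sg_facts[OF sg]
  let ?xs = "[a,b,c,d,e,f,g]"
  have "induced_cycle V E ?xs"
    unfolding induced_cycle_def
  proof (intro conjI)
    show "distinct ?xs" using assms(2-) f(1,2) by auto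
    show "set ?xs \<subseteq> V" using assms(2-) f(3,4) by auto
    show "\<forall>i<length ?xs. \<forall>j<length ?xs. E (?xs!i) (?xs!j) \<longleftrightarrow> (i = (j + 1) mod length ?xs \<or> j = (i + 1) mod length ?xs)"
      using assms(2-) f(1,2) by (simp add: All_less_Suc2)
  qed
  then show ?thesis unfolding has_induced_C_def by (intro exI[of _ ?xs]) simp
qed

lemma P7I:
  assumes sg: "simple_graph V E"
  and "E a b" "E b c" "E c d" "E d e" "E e f" "E f g"
  "\<not>E a c" "\<not>E a d" "\<not>E a e" "\<not>E a f" "\<not>E a g" "\<not>E b d" "\<not>E b e" "\<not>E b f" "\<not>E b g"
  "\<not>E c e" "\<not>E c f" "\<not>E c g" "\<not>E d f" "\<not>E d g" "\<not>E e g"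
  shows "has_induced_P 7 V E"
proof -
  note f = sg_facts[OF sg]
  let ?xs = "[a,b,c,d,e,f,g]"
  have "induced_path V E ?xs"
    unfolding induced_path_def
  proof (intro conjI)
    show "distinct ?xs" using assms(2-) f(1,2) by auto
    show "set ?xs \<subseteq> V" using assms(2-) f(3,4) by auto
    show "\<forall>i<length ?xs. \<forall>j<length ?xs. E (?xs!i) (?xs!j) \<longleftrightarrow> (i = j + 1 \<or> j = i + 1)"
      using assms(2-) f(1,2) by (simp add: All_less_Suc2)
  qed
  then show ?thesis unfolding has_induced_P_def by (intro exI[of _ ?xs]) simp
qed


definition ok :: "('a \<Rightarrow> 'a \<Rightarrow> bool) \<Rightarrow> 'a set \<Rightarrow> 'a set \<Rightarrow> 'a set \<Rightarrow> 'a set \<Rightarrow> 'a \<Rightarrow> bool" where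
  "ok E P1 P2 P3 P4 v \<longleftrightarrow> v \<notin> P1 \<and> v \<notin> P4 \<and> (\<forall>d\<in>P2. \<not> E v d) \<and> (\<forall>e\<in>P3. \<not> E v e)"

lemma ok_mirror: "ok E P4 P3 P2 P1 v = ok E P1 P2 P3 P4 v"
  unfolding ok_def by blast

locale S5 =
  fixes V :: "'a set" and E :: "'a \<Rightarrow> 'a \<Rightarrow> bool" and P1 P2 P3 P4 :: "'a set"
  assumes sg: "simple_graph V E"
  and noP7: "\<not> has_induced_P 7 V E" and noC4: "\<not> has_induced_C 4 V E"
  and noC6: "\<not> has_induced_C 6 V E" and noC7: "\<not> has_induced_C 7 V E"
  and cl2: "\<And>x y. x \<in> P2 \<Longrightarrow> y \<in> P2 \<Longrightarrow> x \<noteq> y \<Longrightarrow> E x y"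
  and cl3: "\<And>x y. x \<in> P3 \<Longrightarrow> y \<in> P3 \<Longrightarrow> x \<noteq> y \<Longrightarrow> E x y"
  and cl1: "\<And>x y. x \<in> P1 \<Longrightarrow> y \<in> P1 \<Longrightarrow> x \<noteq> y \<Longrightarrow> E x y"
  and cl4: "\<And>x y. x \<in> P4 \<Longrightarrow> y \<in> P4 \<Longrightarrow> x \<noteq> y \<Longrightarrow> E x y"
  and n12: "\<And>x. x \<in> P1 \<Longrightarrow> \<exists>y\<in>P2. E x y"
  and n43: "\<And>x. x \<in> P4 \<Longrightarrow> \<exists>y\<in>P3. E x y"
  and n32: "\<And>x. x \<in> P3 \<Longrightarrow> \<exists>y\<in>P2. E x y"
  and n23: "\<And>x. x \<in> P2 \<Longrightarrow> \<exists>y\<in>P3. E x y"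
  and a13: "\<And>x y. x \<in> P1 \<Longrightarrow> y \<in> P3 \<Longrightarrow> \<not> E x y"
  and a14: "\<And>x y. x \<in> P1 \<Longrightarrow> y \<in> P4 \<Longrightarrow> \<not> E x y"
  and a24: "\<And>x y. x \<in> P2 \<Longrightarrow> y \<in> P4 \<Longrightarrow> \<not> E x y"
  and d14: "P1 \<inter> P4 = {}"
begin

lemma Es: "E x y = E y x" using sg_facts[OF sg] by blast
lemma Eirr: "\<not> E x x" using sg_facts[OF sg] by blast

lemma a31: "x \<in> P3 \<Longrightarrow> y \<in> P1 \<Longrightarrow> \<not> E x y" using a13 Es by blast
lemma a41: "x \<in> P4 \<Longrightarrow> y \<in> P1 \<Longrightarrow> \<not> E x y" using a14 Es by blast
lemma a42: "x \<in> P4 \<Longrightarrow> y \<in> P2 \<Longrightarrow> \<not> E x y" using a24 Es by blast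

lemma mirror: "S5 V E P4 P3 P2 P1"
  apply unfold_locales
  using sg noP7 noC4 noC6 noC7 cl1 cl2 cl3 cl4 n12 n43 n32 n23 a42 a41 a31 d14
  by auto

lemma hole2:
  assumes o1: "ok E P1 P2 P3 P4 p1" and o2: "ok E P1 P2 P3 P4 p2" and "E p1 p2"
  and u: "u \<in> P1" and w: "w \<in> P4" and "E p1 u" "\<not> E p2 u" "E p2 w" "\<not> E p1 w"
  shows False
proof -
  obtain d where d: "d \<in> P2" "E u d" using n12 u by blast
  obtain e where e: "e \<in> P3" "E w e" using n43 w by blast
  have F: "\<not> E p1 d" "\<not> E p2 d" "\<not> E p1 e" "\<not> E p2 e" "\<not> E u e" "\<not> E u w" "\<not> E d w"
    using o1 o2 d e u w a13 a14 a24 unfolding ok_def by blast+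
  show False
  proof (cases "E d e")
    case True
    show False using C6I[OF sg, of p1 u d e w p2] noC6 F True d e assms by (simp add: Es)
  next
    case False
    obtain d' where d': "d' \<in> P2" "E e d'" using n32 e by blast
    have F2: "\<not> E p1 d'" "\<not> E p2 d'" "\<not> E d' w" using o1 o2 d' w a24 unfolding ok_def by blast+
    have "d \<noteq> d'" using False d' by (auto simp: Es)
    then have dd: "E d d'" using cl2 d d' by blast
    show False
    proof (cases "E u d'")
      case True
      show False using C6I[OF sg, of p1 u d' e w p2] noC6 F F2 True d' e assms by (simp add: Es)
    next
      case f2: False
      show False using C7I[OF sg, of p1 u d d' e w p2] noC7 F F2 f2 False dd d d' e assms by (simp add: Es)
    qed
  qed
qed

lemma hole3:
  assumes o1: "ok E P1 P2 P3 P4 p1" and o2: "ok E P1 P2 P3 P4 p2" and o3: "ok E P1 P2 P3 P4 p3"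
  and "E p1 p2" "E p2 p3" "\<not> E p1 p3"
  and u: "u \<in> P1" and w: "w \<in> P4" and "E p1 u" "\<not> E p2 u" "\<not> E p3 u" "E p3 w" "\<not> E p1 w" "\<not> E p2 w"
  shows False
proof -
  obtain d where d: "d \<in> P2" "E u d" using n12 u by blast
  obtain e where e: "e \<in> P3" "E w e" using n43 w by blast
  have F: "\<not> E p1 d" "\<not> E p2 d" "\<not> E p3 d" "\<not> E p1 e" "\<not> E p2 e" "\<not> E p3 e" "\<not> E u e" "\<not> E u w" "\<not> E d w"
    using o1 o2 o3 d e u w a13 a14 a24 unfolding ok_def by blast+
  show False
  proof (cases "E d e")
    case True
    show False using C7I[OF sg, of p1 u d e w p3 p2] noC7 F True d e assms by (simp add: Es)
  next
    case False
    obtain d' where d': "d' \<in> P2" "E e d'" using n32 e by blast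
    have F2: "\<not> E p1 d'" "\<not> E p2 d'" "\<not> E p3 d'" "\<not> E d' w" using o1 o2 o3 d' w a24 unfolding ok_def by blast+
    have "d \<noteq> d'" using False d' by (auto simp: Es)
    then have dd: "E d d'" using cl2 d d' by blast
    show False
    proof (cases "E u d'")
      case True
      show False using C7I[OF sg, of p1 u d' e w p3 p2] noC7 F F2 True d' e assms by (simp add: Es)
    next
      case f2: False
      show False using P7I[OF sg, of p1 u d d' e w p3] noP7 F F2 f2 False dd d d' e assms by (simp add: Es)
    qed
  qed
qed


lemma C4F: "E a b \<Longrightarrow> E b c \<Longrightarrow> E c d \<Longrightarrow> E d a \<Longrightarrow> \<not>E a c \<Longrightarrow> \<not>E b d \<Longrightarrow> a\<noteq>c \<Longrightarrow> b\<noteq>d \<Longrightarrow> False"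
  using C4I[OF sg] noC4 by blast

lemma M:
  assumes op: "ok E P1 P2 P3 P4 p" and or: "ok E P1 P2 P3 P4 r" and os: "ok E P1 P2 P3 P4 s"
  and pr: "E p r" and rs: "E r s" and ps: "\<not> E p s" "p \<noteq> s"
  and y: "y \<in> P1" "E r y" and z: "z \<in> P1" "E s z" and w: "w \<in> P4" "E s w"
  and u: "u \<in> P1" "E p u"
  shows "E r u"
proof (rule ccontr)
  assume nru: "\<not> E r u"
  have nP: "p \<notin> P1" "r \<notin> P1" "s \<notin> P1" using op or os unfolding ok_def by auto
  have su: "\<not> E s u"
  proof
    assume "E s u"
    show False by (rule C4F[of p u s r]) (use u ps pr rs nru nP \<open>E s u\<close> in \<open>auto simp: Es\<close>)
  qed
  have pw: "E p w"
  proof (rule ccontr)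
    assume npw: "\<not> E p w"
    show False
    proof (cases "E r w")
      case True
      show False by (rule hole2[OF op or pr u(1) w(1) u(2) nru True npw])
    next
      case False
      show False by (rule hole3[OF op or os pr rs ps(1) u(1) w(1) u(2) nru su w(2) npw False])
    qed
  qed
  have wz: "w \<noteq> z" using d14 w z by auto
  have pz: "\<not> E p z"
  proof
    assume "E p z"
    show False by (rule C4F[of p w s z]) (use pw w z ps wz a41 a14 \<open>E p z\<close> in \<open>auto simp: Es\<close>)
  qed
  have uy: "u \<noteq> y" using y nru by auto
  have py: "E p y"
  proof (rule ccontr)
    assume "\<not> E p y"
    show False by (rule C4F[of p u y r]) (use u y uy cl1 pr nru nP \<open>\<not> E p y\<close> in \<open>auto simp: Es\<close>)
  qed
  have yw: "y \<noteq> w" using d14 w y by auto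
  have ys: "\<not> E y s"
  proof
    assume "E y s"
    show False by (rule C4F[of p y s w]) (use py pw w y ps yw a14 a41 \<open>E y s\<close> in \<open>auto simp: Es\<close>)
  qed
  have uz: "u \<noteq> z" using z su by auto
  have rz: "\<not> E r z"
  proof
    assume "E r z"
    show False by (rule C4F[of p u z r]) (use u z uz cl1 pr nru nP pz \<open>E r z\<close> in \<open>auto simp: Es\<close>)
  qed
  have yz: "y \<noteq> z" using py pz by auto
  show False by (rule C4F[of r y z s]) (use y z yz cl1 rs rz ys nP in \<open>auto simp: Es\<close>)
qed


definition nb where "nb v \<longleftrightarrow> (\<exists>y\<in>P1. E v y) \<and> (\<exists>y\<in>P4. E v y)"

lemma M14:
  assumes op: "ok E P1 P2 P3 P4 p" and or: "ok E P1 P2 P3 P4 r" and os: "ok E P1 P2 P3 P4 s"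
  and pr: "E p r" and rs: "E r s" and ps: "\<not> E p s" "p \<noteq> s"
  and nr: "nb r" and ns: "nb s"
  and u: "u \<in> P1 \<union> P4" "E p u"
  shows "E r u"
proof -
  interpret m: S5 V E P4 P3 P2 P1 by (rule mirror)
  obtain y1 y4 where y: "y1 \<in> P1" "E r y1" "y4 \<in> P4" "E r y4" using nr unfolding nb_def by blast
  obtain z1 z4 where z: "z1 \<in> P1" "E s z1" "z4 \<in> P4" "E s z4" using ns unfolding nb_def by blast
  have op': "ok E P4 P3 P2 P1 p" and or': "ok E P4 P3 P2 P1 r" and os': "ok E P4 P3 P2 P1 s"
    using op or os ok_mirror by metis+
  show ?thesis
  proof (cases "u \<in> P1")
    case True
    show ?thesis by (rule M[OF op or os pr rs ps y(1,2) z(1,2) z(3,4) True u(2)])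
  next
    case False
    then have "u \<in> P4" using u by blast
    show ?thesis by (rule m.M[OF op' or' os' pr rs ps y(3,4) z(3,4) z(1,2) \<open>u \<in> P4\<close> u(2)])
  qed
qed

lemma P0case:
  assumes oa: "ok E P1 P2 P3 P4 a" and ob: "ok E P1 P2 P3 P4 b" and oc: "ok E P1 P2 P3 P4 c"
  and ox: "ok E P1 P2 P3 P4 x"
  and ab: "E a b" and bc: "E b c" and ac: "\<not> E a c" "a \<noteq> c"
  and ax: "E a x" and bx: "\<not> E b x" "b \<noteq> x"
  and na: "nb a" and nbb: "nb b" and nc: "nb c" and nx: "nb x"
  shows False
proof -
  have cb1: "E c b" using bc Es by blast
  have ba1: "E b a" using ab Es by blast
  have ca: "\<not> E c a" "c \<noteq> a" using ac Es by auto
  have cb: "E b u" if "u \<in> P1 \<union> P4" "E c u" for u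
    by (rule M14[OF oc ob oa cb1 ba1 ca nbb na that])
  have ba: "E a u" if "u \<in> P1 \<union> P4" "E b u" for u
    by (rule M14[OF ob oa ox ba1 ax bx na nx that])
  obtain z w where z: "z \<in> P1" "E c z" and w: "w \<in> P4" "E c w" using nc unfolding nb_def by blast
  have "E a z" using z cb ba by blast
  moreover have "E a w" using w cb ba by blast
  moreover have "z \<noteq> w" using d14 z w by blast
  moreover have "\<not> E z w" using a14 z w by blast
  ultimately show False using C4F[of a z c w] z w ac Es by metis
qed

end

lemma nice_facts:
  assumes "nice_blowup_C5 V E B"
  shows "\<And>j x y. x \<in> B (j mod 5) \<Longrightarrow> y \<in> B (j mod 5) \<Longrightarrow> x \<noteq> y \<Longrightarrow> E x y"
  and "\<And>j v. v \<in> B (j mod 5) \<Longrightarrow> \<exists>u\<in>B ((j+1) mod 5). E v u"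
  and "\<And>j v. v \<in> B (j mod 5) \<Longrightarrow> \<exists>u\<in>B ((j+4) mod 5). E v u"
  and "\<And>j x y. x \<in> B (j mod 5) \<Longrightarrow> y \<in> B ((j+2) mod 5) \<Longrightarrow> \<not> E x y"
  and "\<And>j k. j mod 5 \<noteq> k mod 5 \<Longrightarrow> B (j mod 5) \<inter> B (k mod 5) = {}"
proof -
  have D1: "\<forall>j<5. clique V E (B j)" and D2: "\<forall>j<5. \<forall>k<5. j \<noteq> k \<longrightarrow> B j \<inter> B k = {}"
    and D3: "\<forall>j<5. \<forall>v\<in>B j. (\<exists>u\<in>B ((j + 4) mod 5). E v u) \<and> (\<exists>u\<in>B ((j + 1) mod 5). E v u)"
    and D4: "\<forall>j<5. anticomplete E (B j) (B ((j + 2) mod 5))"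
    using assms unfolding nice_blowup_C5_def by blast+
  have lt: "\<And>j::nat. j mod 5 < 5" by simp
  have m: "\<And>j k::nat. (j mod 5 + k) mod 5 = (j + k) mod 5" by (simp add: mod_add_left_eq)
  show "\<And>j x y. x \<in> B (j mod 5) \<Longrightarrow> y \<in> B (j mod 5) \<Longrightarrow> x \<noteq> y \<Longrightarrow> E x y"
    using D1 lt unfolding clique_def by blast
  show "\<And>j v. v \<in> B (j mod 5) \<Longrightarrow> \<exists>u\<in>B ((j+1) mod 5). E v u"
  proof -
    fix j v assume "v \<in> B (j mod 5)"
    then have "\<exists>u\<in>B ((j mod 5 + 1) mod 5). E v u" using D3 lt by blast
    then show "\<exists>u\<in>B ((j+1) mod 5). E v u" by (simp only: m)
  qed
  show "\<And>j v. v \<in> B (j mod 5) \<Longrightarrow> \<exists>u\<in>B ((j+4) mod 5). E v u"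
  proof -
    fix j v assume "v \<in> B (j mod 5)"
    then have "\<exists>u\<in>B ((j mod 5 + 4) mod 5). E v u" using D3 lt by blast
    then show "\<exists>u\<in>B ((j+4) mod 5). E v u" by (simp only: m)
  qed
  show "\<And>j x y. x \<in> B (j mod 5) \<Longrightarrow> y \<in> B ((j+2) mod 5) \<Longrightarrow> \<not> E x y"
  proof -
    fix j x y assume "x \<in> B (j mod 5)" "y \<in> B ((j+2) mod 5)"
    then have "y \<in> B ((j mod 5 + 2) mod 5)" by (simp only: m)
    then show "\<not> E x y" using D4 lt \<open>x \<in> B (j mod 5)\<close> unfolding anticomplete_def by blast
  qed
  show "\<And>j k. j mod 5 \<noteq> k mod 5 \<Longrightarrow> B (j mod 5) \<inter> B (k mod 5) = {}"
    using D2 lt by blast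
qed

lemma A3_facts:
  assumes a: "a \<in> A3 V E B i" and i: "i < 5"
  shows "\<And>j. j < 5 \<Longrightarrow> a \<notin> B j"
  and "\<And>d. d \<in> B ((i+2) mod 5) \<Longrightarrow> \<not> E a d"
  and "\<And>d. d \<in> B ((i+3) mod 5) \<Longrightarrow> \<not> E a d"
  and "\<exists>u\<in>B ((i+1) mod 5). E a u"
  and "\<exists>u\<in>B ((i+4) mod 5). E a u"
  and "\<And>u j. u \<in> B j \<Longrightarrow> j < 5 \<Longrightarrow> E a u \<Longrightarrow> j = (i+4) mod 5 \<or> j = i \<or> j = (i+1) mod 5"
proof -
  have av: "a \<notin> VH B" and sp: "supp E B a = {(i + 4) mod 5, i, (i + 1) mod 5}"
    using a unfolding A3_def by auto
  have S: "\<And>j. j \<in> supp E B a \<longleftrightarrow> j < 5 \<and> (\<exists>u\<in>B j. E a u)" unfolding supp_def by simp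
  show "\<And>j. j < 5 \<Longrightarrow> a \<notin> B j" using av unfolding VH_def by blast
  show "\<And>d. d \<in> B ((i+2) mod 5) \<Longrightarrow> \<not> E a d"
  proof
    fix d assume "d \<in> B ((i+2) mod 5)" "E a d"
    then have "(i+2) mod 5 \<in> supp E B a" using S by auto
    then have "(i+2) mod 5 = (i + 4) mod 5 \<or> (i+2) mod 5 = i \<or> (i+2) mod 5 = (i + 1) mod 5" using sp by simp
    moreover have "i = 0 \<or> i = 1 \<or> i = 2 \<or> i = 3 \<or> i = 4" using i by auto
    ultimately show False by (elim disjE) simp_all
  qed
  show "\<And>d. d \<in> B ((i+3) mod 5) \<Longrightarrow> \<not> E a d"
  proof
    fix d assume "d \<in> B ((i+3) mod 5)" "E a d"
    then have "(i+3) mod 5 \<in> supp E B a" using S by auto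
    then have "(i+3) mod 5 = (i + 4) mod 5 \<or> (i+3) mod 5 = i \<or> (i+3) mod 5 = (i + 1) mod 5" using sp by simp
    moreover have "i = 0 \<or> i = 1 \<or> i = 2 \<or> i = 3 \<or> i = 4" using i by auto
    ultimately show False by (elim disjE) simp_all
  qed
  show "\<exists>u\<in>B ((i+1) mod 5). E a u" using S sp by blast
  show "\<exists>u\<in>B ((i+4) mod 5). E a u" using S sp by blast
  show "\<And>u j. u \<in> B j \<Longrightarrow> j < 5 \<Longrightarrow> E a u \<Longrightarrow> j = (i+4) mod 5 \<or> j = i \<or> j = (i+1) mod 5"
    using S sp by blast
qed



lemma ipath3:
  assumes "induced_path V E [a, b, c]"
  shows "E a b" "E b c" "\<not> E a c" "a \<noteq> c"
  using assms unfolding induced_path_def by (simp_all add: All_less_Suc2)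

theorem lemma8p4:
  fixes V :: "'a set" and E :: "'a \<Rightarrow> 'a \<Rightarrow> bool" and B :: "nat \<Rightarrow> 'a set"
  assumes "simple_graph V E"
    and "\<not> has_induced_P 7 V E" and "\<not> has_induced_C 4 V E"
    and "\<not> has_induced_C 6 V E" and "\<not> has_induced_C 7 V E"
    and "nice_blowup_C5 V E B"
    and "i < 5"
    and "a \<in> A3 V E B i" and "b \<in> A3 V E B i" and "c \<in> A3 V E B i"
    and "induced_path V E [a, b, c]"
  shows "NH E B a \<subseteq> NH E B b \<and> NH E B c \<subseteq> NH E B b"
proof -
  note sgf = sg_facts[OF assms(1)]
  note nf = nice_facts[OF assms(6)]
  have i: "i < 5" by fact
  have icases: "i = 0 \<or> i = 1 \<or> i = 2 \<or> i = 3 \<or> i = 4" using i by auto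
  have ar: "(i+1+1) mod 5 = (i+2) mod 5" "(i+4+4) mod 5 = (i+3) mod 5" "(i+3+4) mod 5 = (i+2) mod 5"
    "(i+2+1) mod 5 = (i+3) mod 5" "(i+1+2) mod 5 = (i+3) mod 5" "(i+4+2) mod 5 = (i+1) mod 5"
    "(i+2+2) mod 5 = (i+4) mod 5" "(i+3+2) mod 5 = i mod 5" "i mod 5 = i"
    "(i+1) mod 5 \<noteq> (i+4) mod 5" "i mod 5 \<noteq> (i+1) mod 5" "i mod 5 \<noteq> (i+4) mod 5"
    "(i+2) mod 5 \<noteq> (i+4) mod 5"
    using icases by (elim disjE; simp)+
  define P1 where "P1 = B ((i+1) mod 5)"
  define P2 where "P2 = B ((i+2) mod 5)"
  define P3 where "P3 = B ((i+3) mod 5)"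
  define P4 where "P4 = B ((i+4) mod 5)"
  have Es: "\<And>x y. E x y = E y x" using sgf by blast
  interpret S: S5 V E P1 P2 P3 P4
  proof
    show "simple_graph V E" "\<not> has_induced_P 7 V E" "\<not> has_induced_C 4 V E"
      "\<not> has_induced_C 6 V E" "\<not> has_induced_C 7 V E" using assms by auto
    show "\<And>x y. x \<in> P2 \<Longrightarrow> y \<in> P2 \<Longrightarrow> x \<noteq> y \<Longrightarrow> E x y" unfolding P2_def using nf(1) by blast
    show "\<And>x y. x \<in> P3 \<Longrightarrow> y \<in> P3 \<Longrightarrow> x \<noteq> y \<Longrightarrow> E x y" unfolding P3_def using nf(1) by blast
    show "\<And>x y. x \<in> P1 \<Longrightarrow> y \<in> P1 \<Longrightarrow> x \<noteq> y \<Longrightarrow> E x y" unfolding P1_def using nf(1) by blast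
    show "\<And>x y. x \<in> P4 \<Longrightarrow> y \<in> P4 \<Longrightarrow> x \<noteq> y \<Longrightarrow> E x y" unfolding P4_def using nf(1) by blast
    show "\<And>x. x \<in> P1 \<Longrightarrow> \<exists>y\<in>P2. E x y"
    proof -
      fix x assume "x \<in> P1"
      then show "\<exists>y\<in>P2. E x y" using nf(2)[where j="i+1"] unfolding P1_def P2_def by (simp only: ar not_False_eq_True)
    qed
    show "\<And>x. x \<in> P4 \<Longrightarrow> \<exists>y\<in>P3. E x y"
    proof -
      fix x assume "x \<in> P4"
      then show "\<exists>y\<in>P3. E x y" using nf(3)[where j="i+4"] unfolding P4_def P3_def by (simp only: ar not_False_eq_True)
    qed
    show "\<And>x. x \<in> P3 \<Longrightarrow> \<exists>y\<in>P2. E x y"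
    proof -
      fix x assume "x \<in> P3"
      then show "\<exists>y\<in>P2. E x y" using nf(3)[where j="i+3"] unfolding P3_def P2_def by (simp only: ar not_False_eq_True)
    qed
    show "\<And>x. x \<in> P2 \<Longrightarrow> \<exists>y\<in>P3. E x y"
    proof -
      fix x assume "x \<in> P2"
      then show "\<exists>y\<in>P3. E x y" using nf(2)[where j="i+2"] unfolding P3_def P2_def by (simp only: ar not_False_eq_True)
    qed
    show "\<And>x y. x \<in> P1 \<Longrightarrow> y \<in> P3 \<Longrightarrow> \<not> E x y"
    proof -
      fix x y assume "x \<in> P1" "y \<in> P3"
      then show "\<not> E x y" using nf(4)[where j="i+1"] unfolding P1_def P3_def by (simp only: ar not_False_eq_True)
    qed
    show "\<And>x y. x \<in> P1 \<Longrightarrow> y \<in> P4 \<Longrightarrow> \<not> E x y"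
    proof -
      fix x y assume "x \<in> P1" "y \<in> P4"
      then have "\<not> E y x" using nf(4)[where j="i+4"] unfolding P1_def P4_def by (simp only: ar not_False_eq_True)
      then show "\<not> E x y" using Es by blast
    qed
    show "\<And>x y. x \<in> P2 \<Longrightarrow> y \<in> P4 \<Longrightarrow> \<not> E x y"
    proof -
      fix x y assume "x \<in> P2" "y \<in> P4"
      then show "\<not> E x y" using nf(4)[where j="i+2"] unfolding P2_def P4_def by (simp only: ar not_False_eq_True)
    qed
    show "P1 \<inter> P4 = {}" unfolding P1_def P4_def using nf(5)[of "i+1" "i+4"] ar by simp
  qed
  have okA: "ok E P1 P2 P3 P4 v" "S.nb v" if "v \<in> A3 V E B i" for v
  proof -
    note F = A3_facts[OF that i]
    show "ok E P1 P2 P3 P4 v" unfolding ok_def P1_def P2_def P3_def P4_def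
      using F(1)[of "(i+1) mod 5"] F(1)[of "(i+4) mod 5"] F(2) F(3) by simp
    show "S.nb v" unfolding S.nb_def unfolding P1_def P4_def using F(4) F(5) by blast
  qed
  have okB: "ok E P1 P2 P3 P4 x" "S.nb x" if "x \<in> B i" for x
  proof -
    have x0: "x \<in> B (i mod 5)" using that ar by simp
    have "x \<notin> P1" using nf(5)[of i "i+1"] x0 ar unfolding P1_def by auto
    moreover have "x \<notin> P4" using nf(5)[of i "i+4"] x0 ar unfolding P4_def by auto
    moreover have "\<forall>d\<in>P2. \<not> E x d" using nf(4)[where j=i] x0 unfolding P2_def by blast
    moreover have "\<forall>d\<in>P3. \<not> E x d"
    proof
      fix d assume "d \<in> P3"
      then have "\<not> E d x" using nf(4)[where j="i+3"] x0 unfolding P3_def by (simp only: ar not_False_eq_True)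
      then show "\<not> E x d" using Es by blast
    qed
    ultimately show "ok E P1 P2 P3 P4 x" unfolding ok_def by blast
    have "\<exists>u\<in>P1. E x u" using nf(2)[where j=i] x0 unfolding P1_def by blast
    moreover have "\<exists>u\<in>P4. E x u" using nf(3)[where j=i] x0 unfolding P4_def by blast
    ultimately show "S.nb x" unfolding S.nb_def by blast
  qed
  have key: "NH E B p \<subseteq> NH E B r"
    if p: "p \<in> A3 V E B i" and r: "r \<in> A3 V E B i" and s: "s \<in> A3 V E B i"
    and pr: "E p r" and rs: "E r s" and ps: "\<not> E p s" "p \<noteq> s" for p r s
  proof
    fix u assume "u \<in> NH E B p"
    then have uH: "u \<in> VH B" and pu: "E p u" unfolding NH_def by auto
    then obtain j where j: "j < 5" "u \<in> B j" unfolding VH_def by blast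
    have jc: "j = (i+4) mod 5 \<or> j = i \<or> j = (i+1) mod 5" using A3_facts(6)[OF p i j(2,1) pu] .
    have "E r u"
    proof (cases "j = i")
      case True
      show ?thesis
      proof (rule ccontr)
        assume nru: "\<not> E r u"
        have "r \<noteq> u" using A3_facts(1)[OF r i j(1)] j(2) by blast
        then show False
          using S.P0case[OF okA(1)[OF p] okA(1)[OF r] okA(1)[OF s] okB(1)[of u] pr rs ps pu nru
              _ okA(2)[OF p] okA(2)[OF r] okA(2)[OF s] okB(2)[of u]] j True by blast
      qed
    next
      case False
      then have "u \<in> P1 \<union> P4" using jc j unfolding P1_def P4_def by auto
      then show ?thesis
        using S.M14[OF okA(1)[OF p] okA(1)[OF r] okA(1)[OF s] pr rs ps okA(2)[OF r] okA(2)[OF s]] pu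
        by blast
    qed
    then show "u \<in> NH E B r" using uH unfolding NH_def by blast
  qed
  have P: "E a b" "E b c" "\<not> E a c" "a \<noteq> c" using ipath3[OF assms(11)] by auto
  have "NH E B a \<subseteq> NH E B b" using key[OF assms(8,9,10)] P by blast
  moreover have "NH E B c \<subseteq> NH E B b" using key[OF assms(10,9,8)] P Es by metis
  ultimately show ?thesis by blast
qed


end
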